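(* The inequality $n^{1/2}\le S_s(n)$ holds for almost all positive integers $n$, i.e., the set of $n$ for which it holds has asymptotic density $1$.
   Context: $s(n)=\sigma(n)-n$ is the sum of proper divisors of $n$, and $S_s(n)=\sum_{d\mid n}s(d)$. *)

theory Defs
  imports "HOL-Number_Theory.Number_Theory"
begin

definition aliquot :: "nat \<Rightarrow> nat" where
  "aliquot n = (\<Sum>d | d dvd n \<and> d < n. d)"

definition S_s :: "nat \<Rightarrow> nat" where
  "S_s n = (\<Sum>d | d dvd n. aliquot d)"

definition has_density :: "nat set \<Rightarrow> real \<Rightarrow> bool" where
  "has_density A c \<longleftrightarrow>
     ((\<lambda>x. real (card {n \<in> {1..x}. n \<in> A}) / real x) \<longlonglongrightarrow> c)"

end

theory Submission
  imports Defs
begin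

definition pcount :: "nat \<Rightarrow> nat" where
  "pcount n = card {p. prime p \<and> p \<le> n}"

definition pmid :: "nat \<Rightarrow> nat set" where
  "pmid m = {p. prime p \<and> m < p \<and> p \<le> 2*m}"

lemma prime_dvd_central:
  assumes "prime p" "m < p" "p \<le> 2*m"
  shows "p dvd (2*m choose m)"
proof -
  have "fact m * fact (2*m - m) * (2*m choose m) = (fact (2*m) :: nat)"
    by (rule binomial_fact_lemma) simp
  moreover have "p dvd (fact (2*m) :: nat)" using assms prime_dvd_fact_iff by blast
  ultimately have "p dvd fact m * fact m * (2*m choose m)" by simp
  moreover have "\<not> p dvd (fact m :: nat)" using assms prime_dvd_fact_iff by simp
  ultimately show ?thesis using assms(1) by (simp add: prime_dvd_mult_iff)
qed

lemma prod_primes_dvd: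
  assumes "finite A" "\<forall>p\<in>A. prime p \<and> p dvd (x::nat)"
  shows "\<Prod>A dvd x"
  using assms
proof (induction A rule: finite_induct)
  case empty then show ?case by simp
next
  case (insert p A)
  have "coprime p (\<Prod>A)"
  proof (rule prime_imp_coprime)
    show "prime p" using insert by auto
    show "\<not> p dvd \<Prod>A"
    proof
      assume pd: "p dvd \<Prod>A"
      have pp: "prime p" using insert.prems by simp
      have "\<exists>q\<in>A. p dvd q"
        using prime_dvd_prod_iff[of A p "\<lambda>x. x", OF insert.hyps(1) pp] pd by simp
      then obtain q where q: "q \<in> A" "p dvd q" by blast
      have "prime q" using insert.prems q(1) by simp
      then have "p = q" using primes_dvd_imp_eq[OF pp _ q(2)] by simp
      then show False using insert.hyps(2) q(1) by simp
    qed
  qed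
  then show ?case using insert by (simp add: divides_mult)
qed

lemma pmid_finite: "finite (pmid m)"
  unfolding pmid_def by (rule finite_subset[of _ "{..2*m}"]) auto

lemma pmid_bound: "m ^ card (pmid m) \<le> 4 ^ m"
proof -
  have "m ^ card (pmid m) = (\<Prod>p\<in>pmid m. m)" by simp
  also have "\<dots> \<le> (\<Prod>p\<in>pmid m. p)"
    by (rule prod_mono) (auto simp: pmid_def)
  also have "\<dots> \<le> (2*m choose m)"
  proof (rule dvd_imp_le)
    show "\<Prod> (pmid m) dvd (2*m choose m)"
      using prod_primes_dvd[OF pmid_finite] prime_dvd_central by (auto simp: pmid_def)
    show "0 < 2*m choose m" by simp
  qed
  also have "\<dots> \<le> 2 ^ (2*m)" by (rule binomial_le_pow2)
  also have "\<dots> = 4 ^ m" by (simp add: power_mult)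
  finally show ?thesis .
qed

lemma pcount_rec: "pcount n \<le> pcount (n div 2) + card (pmid (n div 2)) + 1"
proof -
  have "{p. prime p \<and> p \<le> n} \<subseteq> {p. prime p \<and> p \<le> n div 2} \<union> pmid (n div 2) \<union> {n}"
    by (auto simp: pmid_def)
  then have "pcount n \<le> card ({p. prime p \<and> p \<le> n div 2} \<union> pmid (n div 2) \<union> {n})"
    unfolding pcount_def by (intro card_mono) (auto intro: pmid_finite)
  also have "\<dots> \<le> card ({p. prime p \<and> p \<le> n div 2} \<union> pmid (n div 2)) + card {n}"
    by (rule card_Un_le)
  also have "\<dots> \<le> pcount (n div 2) + card (pmid (n div 2)) + 1"
    unfolding pcount_def using card_Un_le by simp
  finally show ?thesis .
qed

lemma pcount_le: "pcount n \<le> n"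
proof -
  have "{p. prime p \<and> p \<le> n} \<subseteq> {1..n}" by (auto simp: prime_gt_0_nat Suc_le_eq)
  then show ?thesis unfolding pcount_def using card_mono[of "{1..n}"] by fastforce
qed

lemma pmid_small:
  fixes e :: real
  assumes "e > 0"
  shows "\<exists>M. \<forall>m\<ge>M. real (card (pmid m)) \<le> e * m"
proof -
  have "filterlim (\<lambda>m::nat. ln (real m)) at_top sequentially"
    using ln_at_top filterlim_real_sequentially filterlim_compose by blast
  then have "eventually (\<lambda>m::nat. ln (real m) \<ge> ln 4 / e \<and> m \<ge> 2) sequentially"
    by (intro eventually_conj) (auto simp: filterlim_at_top eventually_ge_at_top)
  then obtain M where M: "\<And>m. m \<ge> M \<Longrightarrow> ln (real m) \<ge> ln 4 / e \<and> m \<ge> 2"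
    by (auto simp: eventually_sequentially)
  show ?thesis
  proof (intro exI allI impI)
    fix m assume "m \<ge> M"
    then have l: "ln (real m) \<ge> ln 4 / e" and m2: "m \<ge> 2" using M by auto
    have "real m ^ card (pmid m) \<le> 4 ^ m"
      using pmid_bound[of m] by (metis of_nat_le_iff of_nat_numeral of_nat_power)
    then have "ln (real m ^ card (pmid m)) \<le> ln (4 ^ m)"
      using m2 by (subst ln_le_cancel_iff) auto
    then have c: "card (pmid m) * ln (real m) \<le> m * ln 4"
      using m2 by (simp add: ln_realpow)
    have "ln 4 / e > 0" using assms by simp
    then have lpos: "ln (real m) > 0" using l by linarith
    have "card (pmid m) * (ln 4 / e) \<le> card (pmid m) * ln (real m)"
      using l by (intro mult_left_mono) auto
    then have h1: "card (pmid m) * ln 4 \<le> e * (card (pmid m) * ln (real m))"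
      using assms by (simp add: field_simps)
    have "e * (card (pmid m) * ln (real m)) \<le> e * (m * ln 4)"
      using c assms by (intro mult_left_mono) auto
    then have "card (pmid m) * ln 4 \<le> e * (m * ln 4)" using h1 by linarith
    then have "card (pmid m) * ln 4 \<le> (e * m) * ln 4" by (simp add: mult.assoc)
    then show "real (card (pmid m)) \<le> e * m"
      by (rule mult_right_le_imp_le) simp
  qed
qed

lemma pcount_bound:
  fixes e :: real
  assumes "e > 0"
  shows "\<exists>K. \<forall>n. real (pcount n) \<le> 2*e*n + K"
proof -
  obtain M where M: "\<And>m. m \<ge> M \<Longrightarrow> real (card (pmid m)) \<le> e * m"
    using pmid_small[OF assms] by blast
  define N0 where "N0 = max (2*M+2) (nat \<lceil>2/e\<rceil> + 1)"
  have "real (pcount n) \<le> 2*e*n + N0" for n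
  proof (induction n rule: less_induct)
    case (less n)
    show ?case
    proof (cases "n < N0")
      case True
      have "real (pcount n) \<le> real N0" using pcount_le[of n] True by simp
      moreover have "0 \<le> 2*e*n" using assms by simp
      ultimately show ?thesis by linarith
    next
      case False
      define m where "m = n div 2"
      have "m < n" using False by (simp add: m_def N0_def)
      have "m \<ge> M" using False by (simp add: m_def N0_def)
      have "2*m \<le> n" by (simp add: m_def)
      have "n > 2/e" using False unfolding N0_def by linarith
      then have en: "e*n > 2" using assms by (simp add: field_simps)
      have "real (pcount n) \<le> pcount m + card (pmid m) + 1"
        using pcount_rec[of n] unfolding m_def by (metis of_nat_add of_nat_le_iff of_nat_1)
      also have "\<dots> \<le> (2*e*m + N0) + e*m + 1"
        using less.IH[OF \<open>m < n\<close>] M[OF \<open>m \<ge> M\<close>] by linarith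
      also have "\<dots> \<le> 2*e*n + N0"
      proof -
        have "3*e*m \<le> 3/2*e*n"
          using \<open>2*m \<le> n\<close> assms by (simp add: mult_left_mono of_nat_le_iff[symmetric])
        then show ?thesis using en by linarith
      qed
      finally show ?thesis .
    qed
  qed
  then show ?thesis by blast
qed

lemma pcount_lim: "(\<lambda>n. real (pcount n) / real n) \<longlonglongrightarrow> 0"
proof (rule LIMSEQ_I)
  fix r :: real assume r: "r > 0"
  obtain K where K: "\<And>n. real (pcount n) \<le> 2*(r/4)*n + K"
    using pcount_bound[of "r/4"] r by auto
  have K0: "K \<ge> 0" using K[of 0] by simp
  define N where "N = nat \<lceil>4*K/r\<rceil> + 1"
  show "\<exists>no. \<forall>n\<ge>no. norm (real (pcount n) / real n - 0) < r"
  proof (intro exI allI impI)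
    fix n assume "n \<ge> N"
    then have nK: "real n > 4*K/r" unfolding N_def by linarith
    then have npos: "real n > 0" using K0 r by (smt (verit) divide_nonneg_pos)
    have "K < r/4 * n" using nK r by (simp add: field_simps)
    then have "real (pcount n) < r * n" using K[of n] by linarith
    then show "norm (real (pcount n) / real n - 0) < r"
      using npos by (simp add: field_simps)
  qed
qed

lemma composite_in:
  assumes "n \<ge> 2" "\<not> prime n"
  shows "sqrt (real n) \<le> real (S_s n)"
proof -
  obtain a where a: "a dvd n" "a \<noteq> 1" "a \<noteq> n"
    using assms prime_nat_iff by auto
  obtain b where b: "n = a * b" using a by auto
  have a1: "a > 1" "a < n" using a assms dvd_imp_le[of a n] by (auto intro: Nat.gr0I)
  have b0: "b \<noteq> 0" using b assms by auto
  have "b \<noteq> 1" using b a by auto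
  then have b1a: "b > 1" using b0 by linarith
  have "b * 1 < b * a" using b0 a1 by (intro mult_strict_left_mono) auto
  then have b1: "b > 1" "b < n" using b1a b by (auto simp: mult.commute)
  define c where "c = max a b"
  have cd: "c dvd n" "c < n" using b a1 b1 by (auto simp: c_def max_def)
  have "c \<le> aliquot n"
    unfolding aliquot_def
    by (rule member_le_sum[where f = id, simplified]) (use cd assms in auto)
  also have "aliquot n \<le> S_s n"
    unfolding S_s_def
    by (rule member_le_sum[where f = aliquot, simplified]) (use assms in auto)
  finally have cS: "c \<le> S_s n" .
  have "real n \<le> real c ^ 2"
  proof -
    have "n \<le> c * c" using b by (simp add: c_def max_def mult_le_mono)
    then show ?thesis by (simp add: power2_eq_square flip: of_nat_mult)
  qed
  then have "sqrt (real n) \<le> sqrt (real c ^ 2)" by (rule real_sqrt_le_mono)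
  then have "sqrt (real n) \<le> real c" by simp
  then show ?thesis using cS by linarith
qed

theorem lemma6p10:
  shows "has_density {n. n \<ge> 1 \<and> sqrt (real n) \<le> real (S_s n)} 1"
proof -
  let ?A = "{n. n \<ge> 1 \<and> sqrt (real n) \<le> real (S_s n)}"
  let ?f = "\<lambda>x. real (card {n \<in> {1..x}. n \<in> ?A}) / real x"
  have up: "?f x \<le> 1" for x
  proof (cases "x = 0")
    case False
    have "card {n \<in> {1..x}. n \<in> ?A} \<le> card {1..x}" by (intro card_mono) auto
    then show ?thesis using False by simp
  qed simp
  have low: "1 - (1 + real (pcount x)) / real x \<le> ?f x" if "x \<ge> 1" for x
  proof -
    have "{1..x} \<subseteq> {n \<in> {1..x}. n \<in> ?A} \<union> ({1} \<union> {p. prime p \<and> p \<le> x})"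
      using composite_in by (auto simp: not_less_eq_eq)
    then have "card {1..x} \<le> card ({n \<in> {1..x}. n \<in> ?A} \<union> ({1} \<union> {p. prime p \<and> p \<le> x}))"
      by (intro card_mono) auto
    also have "\<dots> \<le> card {n \<in> {1..x}. n \<in> ?A} + card ({1} \<union> {p. prime p \<and> p \<le> x})"
      by (rule card_Un_le)
    also have "\<dots> \<le> card {n \<in> {1..x}. n \<in> ?A} + (1 + pcount x)"
      unfolding pcount_def using card_Un_le[of "{1}"] by simp
    finally have xl: "real x \<le> card {n \<in> {1..x}. n \<in> ?A} + (1 + real (pcount x))"
      by (simp add: of_nat_le_iff[symmetric] del: of_nat_le_iff)
    have "1 - (1 + real (pcount x)) / real x = (real x - (1 + real (pcount x))) / real x"
      using that by (simp add: field_simps)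
    also have "\<dots> \<le> ?f x"
      by (intro divide_right_mono) (use xl in linarith, simp)
    finally show ?thesis .
  qed
  have lim0: "(\<lambda>x. 1 - (1 + real (pcount x)) / real x) \<longlonglongrightarrow> 1 - (0 + 0)"
  proof (intro tendsto_intros)
    show "(\<lambda>x. (1 + real (pcount x)) / real x) \<longlonglongrightarrow> 0 + 0"
      unfolding add_divide_distrib
      by (intro tendsto_intros pcount_lim lim_inverse_n')
  qed
  show ?thesis unfolding has_density_def
  proof (rule tendsto_sandwich[OF _ _ lim0[simplified] tendsto_const])
    show "eventually (\<lambda>x. 1 - (1 + real (pcount x)) / real x \<le> ?f x) sequentially"
      using low by (auto simp: eventually_sequentially)
    show "eventually (\<lambda>x. ?f x \<le> 1) sequentially" using up by simp
  qed
qed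

end
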